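(* Let $k$ be a field and let $A$ be a $k$-algebra with two graded algebra decompositions $A=\bigoplus_{i=0}^{\infty}A_i=\bigoplus_{i=0}^{\infty}B_i$ such that (1) $A_0=B_0=k$; (2) $A$ is generated as an algebra by $A_1$, and also by $B_1$; (3) either $A_1$ or $B_1$ is finite dimensional over $k$. Suppose that every algebra automorphism of $A$ is graded with respect to the grading $(A_i)_{i\ge0}$, i.e. $\mathrm{Aut}(A)=\mathrm{Aut}_{gr}(A)$. Then $A_i=B_i$ for all $i$.
   Context: $\mathrm{Aut}(A)$ denotes the group of $k$-algebra automorphisms of $A$, and $\mathrm{Aut}_{gr}(A)$ the subgroup of those $\phi$ with $\phi(A_i)=A_i$ for all $i$. *)

theory Defs
  imports Complex_Main
begin

definition k_algebra :: "('k::field \<Rightarrow> 'a::ring_1 \<Rightarrow> 'a) \<Rightarrow> bool" where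
  "k_algebra smult \<longleftrightarrow> vector_space smult \<and>
     (\<forall>c x y. smult c (x * y) = smult c x * y \<and> smult c (x * y) = x * smult c y)"

definition graded_decomp :: "('k::field \<Rightarrow> 'a::ring_1 \<Rightarrow> 'a) \<Rightarrow> (nat \<Rightarrow> 'a set) \<Rightarrow> bool" where
  "graded_decomp smult G \<longleftrightarrow>
     (\<forall>i. module.subspace smult (G i)) \<and>
     (\<forall>x. \<exists>!f :: nat \<Rightarrow> 'a. (\<forall>i. f i \<in> G i) \<and> finite {i. f i \<noteq> 0} \<and>
                             x = (\<Sum>i\<in>{i. f i \<noteq> 0}. f i)) \<and>
     (\<forall>i j. \<forall>x\<in>G i. \<forall>y\<in>G j. x * y \<in> G (i + j)) \<and>
     1 \<in> G 0"

definition alg_gen :: "('k::field \<Rightarrow> 'a::ring_1 \<Rightarrow> 'a) \<Rightarrow> 'a set \<Rightarrow> 'a set" where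
  "alg_gen smult S = \<Inter>{C. S \<subseteq> C \<and> 1 \<in> C \<and> module.subspace smult C \<and>
                           (\<forall>x\<in>C. \<forall>y\<in>C. x * y \<in> C)}"

definition fin_dim :: "('k::field \<Rightarrow> 'a::ring_1 \<Rightarrow> 'a) \<Rightarrow> 'a set \<Rightarrow> bool" where
  "fin_dim smult V \<longleftrightarrow> (\<exists>S. finite S \<and> module.span smult S = V)"

definition alg_aut :: "('k::field \<Rightarrow> 'a::ring_1 \<Rightarrow> 'a) \<Rightarrow> ('a \<Rightarrow> 'a) \<Rightarrow> bool" where
  "alg_aut smult \<phi> \<longleftrightarrow> bij \<phi> \<and> Vector_Spaces.linear smult smult \<phi> \<and>
     (\<forall>x y. \<phi> (x * y) = \<phi> x * \<phi> y) \<and> \<phi> 1 = 1"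

end

theory Submission
  imports Defs
begin


locale grd =
  fixes smult :: "'k::field \<Rightarrow> 'a::ring_1 \<Rightarrow> 'a"
    and G :: "nat \<Rightarrow> 'a set"
  assumes alg: "k_algebra smult"
    and gd: "graded_decomp smult G"
begin

sublocale vector_space smult
  using alg by (simp add: k_algebra_def)

lemma smult_mult1: "smult c (x * y) = smult c x * y"
  using alg by (simp add: k_algebra_def)
lemma smult_mult2: "smult c (x * y) = x * smult c y"
  using alg unfolding k_algebra_def by blast

lemma G_sub: "subspace (G i)" using gd by (simp add: graded_decomp_def)
lemma G_mult: "x \<in> G i \<Longrightarrow> y \<in> G j \<Longrightarrow> x * y \<in> G (i + j)"
  using gd by (simp add: graded_decomp_def)
lemma one_G0: "1 \<in> G 0" using gd by (simp add: graded_decomp_def)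

definition P :: "'a \<Rightarrow> (nat \<Rightarrow> 'a) \<Rightarrow> bool" where
  "P x f \<longleftrightarrow> (\<forall>i. f i \<in> G i) \<and> finite {i. f i \<noteq> 0} \<and> x = (\<Sum>i\<in>{i. f i \<noteq> 0}. f i)"

lemma ex1P: "\<exists>!f. P x f"
  using gd unfolding graded_decomp_def P_def by blast

definition cp :: "nat \<Rightarrow> 'a \<Rightarrow> 'a" where
  "cp i x = (THE f. P x f) i"

lemma P_cp: "P x (\<lambda>i. cp i x)"
  unfolding cp_def using theI'[OF ex1P] by simp

lemma cp_mem: "cp i x \<in> G i" using P_cp unfolding P_def by blast
lemma cp_fin: "finite {i. cp i x \<noteq> 0}" using P_cp unfolding P_def by blast

lemma cp_sum:
  assumes "finite S" "{i. cp i x \<noteq> 0} \<subseteq> S"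
  shows "x = (\<Sum>i\<in>S. cp i x)"
proof -
  have "x = (\<Sum>i\<in>{i. cp i x \<noteq> 0}. cp i x)" using P_cp unfolding P_def by blast
  also have "\<dots> = (\<Sum>i\<in>S. cp i x)"
    by (rule sum.mono_neutral_left) (use assms in auto)
  finally show ?thesis .
qed

lemma cp_unique:
  assumes "finite S" "\<And>i. f i \<in> G i" "\<And>i. i \<notin> S \<Longrightarrow> f i = 0" "x = (\<Sum>i\<in>S. f i)"
  shows "cp i x = f i"
proof -
  have sub: "{i. f i \<noteq> 0} \<subseteq> S" using assms(3) by auto
  have "P x f"
    unfolding P_def
  proof (intro conjI)
    show "finite {i. f i \<noteq> 0}" using sub assms(1) finite_subset by blast
    have "(\<Sum>i\<in>{i. f i \<noteq> 0}. f i) = (\<Sum>i\<in>S. f i)"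
      by (rule sum.mono_neutral_left) (use assms sub in auto)
    then show "x = (\<Sum>i\<in>{i. f i \<noteq> 0}. f i)" using assms(4) by simp
  qed (use assms(2) in auto)
  then have "(THE f. P x f) = f" by (rule the1_equality[OF ex1P])
  then show ?thesis unfolding cp_def by simp
qed

lemma cp_hom: "y \<in> G j \<Longrightarrow> cp i y = (if i = j then y else 0)"
  by (rule cp_unique[where S="{j}"]) (auto intro: subspace_0[OF G_sub])

lemma cp_add: "cp i (x + y) = cp i x + cp i y"
proof (rule cp_unique[where S="{i. cp i x \<noteq> 0} \<union> {i. cp i y \<noteq> 0}"])
  show "finite ({i. cp i x \<noteq> 0} \<union> {i. cp i y \<noteq> 0})" using cp_fin by auto
  show "\<And>i. cp i x + cp i y \<in> G i" using subspace_add[OF G_sub] cp_mem by blast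
  show "x + y = (\<Sum>i\<in>{i. cp i x \<noteq> 0} \<union> {i. cp i y \<noteq> 0}. cp i x + cp i y)"
    using cp_sum[of _ x] cp_sum[of _ y] cp_fin by (simp add: sum.distrib)
qed auto

lemma cp_scale: "cp i (smult c x) = smult c (cp i x)"
proof (rule cp_unique[where S="{i. cp i x \<noteq> 0}"])
  show "\<And>i. smult c (cp i x) \<in> G i" using subspace_scale[OF G_sub] cp_mem by blast
  show "smult c x = (\<Sum>i\<in>{i. cp i x \<noteq> 0}. smult c (cp i x))"
    using cp_sum[of _ x] cp_fin by (simp add: scale_sum_right[symmetric])
qed (auto simp: cp_fin)

lemma cp_linear: "Vector_Spaces.linear smult smult (cp i)"
  by (simp add: Vector_Spaces.linear_iff cp_add cp_scale vector_space_axioms)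

lemma cp_zero[simp]: "cp i 0 = 0"
  using cp_hom[of 0 0 i] subspace_0[OF G_sub] by auto
lemma cp_neg: "cp i (- x) = - cp i x"
proof -
  have "cp i x + cp i (- x) = 0" using cp_add[of i x "-x"] by simp
  then show ?thesis by (metis add.inverse_unique)
qed
lemma cp_diff: "cp i (x - y) = cp i x - cp i y"
  using cp_add[of i x "-y"] cp_neg by simp
lemma cp_sumf: "cp i (sum f S) = (\<Sum>j\<in>S. cp i (f j))"
  by (induct S rule: infinite_finite_induct) (auto simp: cp_add)

lemma cp_cp: "cp i (cp j x) = (if i = j then cp j x else 0)"
  using cp_hom[OF cp_mem] by simp

lemma cp_eqI: "(\<And>i. cp i x = cp i y) \<Longrightarrow> x = y"
proof -
  assume h: "\<And>i. cp i x = cp i y"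
  have "x - y = (\<Sum>i\<in>{i. cp i (x-y) \<noteq> 0}. cp i (x - y))" using cp_sum cp_fin by blast
  also have "\<dots> = 0" by (simp add: cp_diff h)
  finally show ?thesis by simp
qed

lemma G_0: "0 \<in> G i" by (rule subspace_0[OF G_sub])

lemma mult_in:
  assumes W: "subspace W" and h: "\<And>i j. cp i x * cp j y \<in> W"
  shows "x * y \<in> W"
proof -
  define S where "S = {i. cp i x \<noteq> 0} \<union> {i. cp i y \<noteq> 0}"
  have fS: "finite S" using cp_fin S_def by auto
  have "x * y = (\<Sum>i\<in>S. cp i x) * (\<Sum>j\<in>S. cp j y)"
    using cp_sum[OF fS, of x] cp_sum[OF fS, of y] S_def by auto
  also have "\<dots> = (\<Sum>j\<in>S. \<Sum>i\<in>S. cp i x * cp j y)"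
    by (simp add: sum_distrib_left sum_distrib_right)
  finally show ?thesis using h by (simp add: subspace_sum[OF W])
qed

definition above :: "nat \<Rightarrow> 'a set" where "above n = {x. \<forall>i<n. cp i x = 0}"
definition below :: "nat \<Rightarrow> 'a set" where "below n = {x. \<forall>i\<ge>n. cp i x = 0}"

lemma above_sub: "subspace (above n)"
  unfolding subspace_def above_def by (auto simp: cp_add cp_scale)
lemma below_sub: "subspace (below n)"
  unfolding subspace_def below_def by (auto simp: cp_add cp_scale)

lemma G_above: "z \<in> G m \<Longrightarrow> n \<le> m \<Longrightarrow> z \<in> above n"
  unfolding above_def by (auto simp: cp_hom)
lemma G_below: "z \<in> G m \<Longrightarrow> m < n \<Longrightarrow> z \<in> below n"
  unfolding below_def by (auto simp: cp_hom)
lemma above_0[simp]: "above 0 = UNIV" unfolding above_def by auto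
lemma below_0: "x \<in> below 0 \<Longrightarrow> x = 0"
  unfolding below_def by (auto intro: cp_eqI)
lemma below_above: "x \<in> below n \<Longrightarrow> x \<in> above n \<Longrightarrow> x = 0"
proof -
  assume "x \<in> below n" "x \<in> above n"
  then have "cp i x = cp i 0" for i unfolding below_def above_def by (cases "i < n") auto
  then show "x = 0" by (rule cp_eqI)
qed
lemma below_G: "x \<in> below n \<Longrightarrow> x \<in> G n \<Longrightarrow> x = 0"
  unfolding below_def using cp_hom by fastforce
lemma below_mono: "x \<in> below m \<Longrightarrow> m \<le> n \<Longrightarrow> x \<in> below n"
  unfolding below_def by auto
lemma above_mono: "x \<in> above n \<Longrightarrow> m \<le> n \<Longrightarrow> x \<in> above m"
  unfolding above_def by auto

lemma above_mult: "x \<in> above p \<Longrightarrow> y \<in> above q \<Longrightarrow> x * y \<in> above (p + q)"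
proof (rule mult_in[OF above_sub])
  fix i j assume "x \<in> above p" "y \<in> above q"
  then show "cp i x * cp j y \<in> above (p + q)"
  proof (cases "i < p \<or> j < q")
    case True then show ?thesis using \<open>x \<in> above p\<close> \<open>y \<in> above q\<close>
      by (auto simp: above_def)
  next
    case False then show ?thesis using G_above[OF G_mult[OF cp_mem cp_mem]] by auto
  qed
qed

lemma below_mult: "x \<in> below p \<Longrightarrow> y \<in> below q \<Longrightarrow> x * y \<in> below (p + q - 1)"
proof (rule mult_in[OF below_sub])
  fix i j assume "x \<in> below p" "y \<in> below q"
  then show "cp i x * cp j y \<in> below (p + q - 1)"
  proof (cases "p \<le> i \<or> q \<le> j")
    case True then show ?thesis using \<open>x \<in> below p\<close> \<open>y \<in> below q\<close>
      by (auto simp: below_def)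
  next
    case False then show ?thesis using G_below[OF G_mult[OF cp_mem cp_mem]] by auto
  qed
qed

lemma cp_above: "x \<in> above i \<Longrightarrow> x - cp i x \<in> above (Suc i)"
  unfolding above_def by (auto simp: cp_diff cp_cp less_Suc_eq)

lemma cp_mult_above:
  assumes x: "x \<in> above i" and y: "y \<in> above j"
  shows "cp (i + j) (x * y) = cp i x * cp j y"
proof -
  have e: "x * y = (x - cp i x) * y + cp i x * (y - cp j y) + cp i x * cp j y"
    by (simp add: algebra_simps)
  have a1: "(x - cp i x) * y \<in> above (i + j)"
    using above_mult[OF cp_above[OF x] y] above_mono by fastforce
  have a1': "cp (i+j) ((x - cp i x) * y) = 0"
    using above_mult[OF cp_above[OF x] y] unfolding above_def by auto
  have a2': "cp (i+j) (cp i x * (y - cp j y)) = 0"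
    using above_mult[OF G_above[OF cp_mem order_refl] cp_above[OF y]] unfolding above_def by auto
  have a3: "cp (i+j) (cp i x * cp j y) = cp i x * cp j y"
    using cp_hom[OF G_mult[OF cp_mem cp_mem]] by simp
  show ?thesis by (subst e) (simp add: cp_add a1' a2' a3)
qed

definition trunc :: "nat \<Rightarrow> 'a \<Rightarrow> 'a" where "trunc n x = (\<Sum>i<n. cp i x)"

lemma trunc_linear: "Vector_Spaces.linear smult smult (trunc n)"
  by (simp add: Vector_Spaces.linear_iff vector_space_axioms trunc_def cp_add cp_scale
      sum.distrib scale_sum_right)

lemma cp_trunc: "cp j (trunc n x) = (if j < n then cp j x else 0)"
  unfolding trunc_def by (simp add: cp_sumf cp_cp)

lemma trunc_below: "trunc n x \<in> below n"
  unfolding below_def by (simp add: cp_trunc)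
lemma trunc_id: "x \<in> below n \<Longrightarrow> trunc n x = x"
  by (rule cp_eqI) (auto simp: cp_trunc below_def)
lemma trunc_above: "x \<in> above n \<Longrightarrow> trunc n x = 0"
  by (rule cp_eqI) (auto simp: cp_trunc above_def)

lemma span_mult_closed:
  assumes XX: "\<And>x y. x \<in> X \<Longrightarrow> y \<in> X \<Longrightarrow> x * y \<in> span X"
    and x: "x \<in> span X" and y: "y \<in> span X"
  shows "x * y \<in> span X"
proof -
  have base: "x * y \<in> span X" if x1: "x \<in> X" and y1: "y \<in> span X" for x y
  proof -
    have "subspace {y. x * y \<in> span X}"
      unfolding subspace_def
    proof (intro conjI ballI allI)
      show "0 \<in> {y. x * y \<in> span X}" by (simp add: span_zero)
      fix a b assume "a \<in> {y. x * y \<in> span X}" "b \<in> {y. x * y \<in> span X}"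
      then show "a + b \<in> {y. x * y \<in> span X}" by (simp add: distrib_left span_add)
    next
      fix c a assume "a \<in> {y. x * y \<in> span X}"
      then show "smult c a \<in> {y. x * y \<in> span X}"
        by (simp add: smult_mult2[symmetric] span_scale)
    qed
    then show ?thesis using span_subspace_induct[OF y1] XX[OF x1] by blast
  qed
  have "subspace {x. x * y \<in> span X}"
    unfolding subspace_def
  proof (intro conjI ballI allI)
    show "0 \<in> {x. x * y \<in> span X}" by (simp add: span_zero)
    fix a b assume "a \<in> {x. x * y \<in> span X}" "b \<in> {x. x * y \<in> span X}"
    then show "a + b \<in> {x. x * y \<in> span X}" by (simp add: distrib_right span_add)
  next
    fix c a assume "a \<in> {x. x * y \<in> span X}"
    then show "smult c a \<in> {x. x * y \<in> span X}"
      by (simp add: smult_mult1[symmetric] span_scale)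
  qed
  then show ?thesis using span_subspace_induct[OF x] base[OF _ y] by blast
qed

lemma kernel_fin:
  assumes lf: "Vector_Spaces.linear smult smult f" and T: "finite T" and XT: "X \<subseteq> span T"
    and sur: "X \<subseteq> f ` X" and x: "x \<in> X" and fx: "f x = 0"
  shows "x = 0"
proof (rule ccontr)
  assume x0: "x \<noteq> 0"
  interpret lf: Vector_Spaces.linear smult smult f by fact
  have "independent {x}" using x0 by (simp add: independent_insert)
  then obtain B where B: "{x} \<subseteq> B" "B \<subseteq> X" "independent B" "X \<subseteq> span B"
    using maximal_independent_subset_extend[of "{x}" X] x by blast
  have fin: "finite B" using independent_span_bound[OF T B(3)] B(2) XT by auto
  have "X \<subseteq> f ` span B" using sur B(4) by auto
  also have "f ` span B = span (f ` B)" by (simp add: lf.span_image)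
  also have "f ` B = insert 0 (f ` (B - {x}))" using B(1) fx by auto
  also have "span (insert 0 (f ` (B - {x}))) = span (f ` (B - {x}))"
    by (simp add: span_insert_0)
  finally have "B \<subseteq> span (f ` (B - {x}))" using B(2) by auto
  then have "card B \<le> card (f ` (B - {x}))"
    using independent_span_bound[of "f ` (B-{x})" B] B(3) fin by auto
  also have "\<dots> \<le> card (B - {x})" by (rule card_image_le) (use fin in auto)
  also have "\<dots> < card B"
  proof -
    have "0 < card B" using fin B(1) card_gt_0_iff by blast
    then show ?thesis using fin B(1) by (simp add: card_Diff_singleton)
  qed
  finally show False by simp
qed

end


lemma gen_univ:
  assumes "alg_gen smult S = UNIV" "module.subspace smult C" "1 \<in> C" "S \<subseteq> C"
    "\<And>x y. x \<in> C \<Longrightarrow> y \<in> C \<Longrightarrow> x * y \<in> C"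
  shows "y \<in> C"
proof -
  have "alg_gen smult S \<subseteq> C" unfolding alg_gen_def using assms(2-5) by blast
  then show ?thesis using assms(1) by auto
qed

locale twog = a: grd smult A + b: grd smult B
  for smult :: "'k::field \<Rightarrow> 'a::ring_1 \<Rightarrow> 'a" and A B +
  assumes A0: "A 0 = range (\<lambda>c. smult c 1)" and B0: "B 0 = range (\<lambda>c. smult c 1)"
    and genA: "alg_gen smult (A 1) = UNIV" and genB: "alg_gen smult (B 1) = UNIV"
begin

lemma AB0: "A 0 = B 0" using A0 B0 by simp

definition D :: "nat \<Rightarrow> 'a set" where "D l = b.above l \<inter> a.below (Suc l)"

lemma D_mult: "x \<in> D p \<Longrightarrow> y \<in> D q \<Longrightarrow> x * y \<in> D (p + q)"
  unfolding D_def using b.above_mult a.below_mult[of x "Suc p" y "Suc q"] by auto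

lemma spanD_univ: "y \<in> a.span (\<Union>l. D l)"
proof (rule gen_univ[OF genA])
  show "a.subspace (a.span (\<Union>l. D l))" by simp
  show "\<And>x y. x \<in> a.span (\<Union>l. D l) \<Longrightarrow> y \<in> a.span (\<Union>l. D l) \<Longrightarrow> x * y \<in> a.span (\<Union>l. D l)"
    by (rule a.span_mult_closed) (auto intro!: a.span_base dest: D_mult)
  have one: "1 \<in> D 0" unfolding D_def using a.G_below[OF a.one_G0] by auto
  then show "1 \<in> a.span (\<Union>l. D l)" by (auto intro: a.span_base)
  show "A 1 \<subseteq> a.span (\<Union>l. D l)"
  proof
    fix x assume x: "x \<in> A 1"
    define c where "c = b.cp 0 x"
    have cA: "c \<in> A 0" using b.cp_mem AB0 c_def by auto
    have "c \<in> D 0" unfolding D_def using a.G_below[OF cA] by auto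
    moreover have "x - c \<in> D 1"
      unfolding D_def
    proof
      show "x - c \<in> b.above 1" using b.cp_above[of x 0] c_def by simp
      show "x - c \<in> a.below (Suc 1)"
        using a.G_below[OF x] a.G_below[OF cA] a.subspace_diff[OF a.below_sub] by auto
    qed
    ultimately have "c + (x - c) \<in> a.span (\<Union>l. D l)"
      by (intro a.span_add) (auto intro: a.span_base)
    then show "x \<in> a.span (\<Union>l. D l)" by simp
  qed
qed

lemma K2: "\<exists>f g. f \<in> a.below n \<and> g \<in> b.above n \<and> y = f + g"
proof -
  let ?H = "{f + g |f g. f \<in> a.below n \<and> g \<in> b.above n}"
  have sH: "a.subspace ?H" by (rule a.subspace_sums[OF a.below_sub b.above_sub])
  have "(\<Union>l. D l) \<subseteq> ?H"
  proof
    fix d assume "d \<in> (\<Union>l. D l)"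
    then obtain l where d: "d \<in> D l" by auto
    show "d \<in> ?H"
    proof (cases "l < n")
      case True
      then have "d \<in> a.below n" using d a.below_mono unfolding D_def by auto
      then show ?thesis using a.subspace_0[OF b.above_sub] by force
    next
      case False
      then have "d \<in> b.above n" using d b.above_mono unfolding D_def by auto
      then show ?thesis using a.subspace_0[OF a.below_sub] by force
    qed
  qed
  then have "a.span (\<Union>l. D l) \<subseteq> ?H" by (rule a.span_minimal[OF _ sH])
  then show ?thesis using spanD_univ[of y] by blast
qed

lemma fin_below:
  assumes "fin_dim smult (A 1)"
  shows "\<exists>T. finite T \<and> a.below n \<subseteq> a.span T"
proof -
  obtain S where S: "finite S" "a.span S = A 1" using assms unfolding fin_dim_def by blast
  define W where "W = {prod_list w |w. set w \<subseteq> S}"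
  have pA: "prod_list w \<in> A (length w)" if "set w \<subseteq> S" for w
    using that
  proof (induct w)
    case Nil then show ?case using a.one_G0 by simp
  next
    case (Cons x w)
    have "x \<in> A 1" using Cons.prems S(2) a.span_base by auto
    then show ?case using a.G_mult Cons by fastforce
  qed
  have WU: "y \<in> a.span W" for y
  proof (rule gen_univ[OF genA])
    show "a.subspace (a.span W)" by simp
    show "\<And>x y. x \<in> a.span W \<Longrightarrow> y \<in> a.span W \<Longrightarrow> x * y \<in> a.span W"
    proof (rule a.span_mult_closed)
      fix x y assume "x \<in> W" "y \<in> W"
      then obtain u v where "x = prod_list u" "set u \<subseteq> S" "y = prod_list v" "set v \<subseteq> S"
        unfolding W_def by blast
      then have "x * y \<in> W" unfolding W_def by (auto intro!: exI[of _ "u @ v"])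
      then show "x * y \<in> a.span W" by (rule a.span_base)
    qed
    show "1 \<in> a.span W" unfolding W_def by (rule a.span_base) (auto intro!: exI[of _ "[]"])
    have "S \<subseteq> W" unfolding W_def by (auto intro!: exI[of _ "[_]"])
    then show "A 1 \<subseteq> a.span W" using S(2) a.span_mono by blast
  qed
  define T where "T = insert 0 (prod_list ` {w. set w \<subseteq> S \<and> length w \<le> n})"
  have fT: "finite T" unfolding T_def using finite_lists_length_le[OF S(1)] by auto
  interpret lt: Vector_Spaces.linear smult smult "a.trunc n" by (rule a.trunc_linear)
  have tW: "a.trunc n ` W \<subseteq> T"
  proof
    fix z assume "z \<in> a.trunc n ` W"
    then obtain w where w: "set w \<subseteq> S" "z = a.trunc n (prod_list w)" unfolding W_def by blast
    show "z \<in> T"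
    proof (cases "length w < n")
      case True
      then have "z = prod_list w" using w a.trunc_id a.G_below[OF pA[OF w(1)]] by simp
      then show ?thesis unfolding T_def using w True by auto
    next
      case False
      then have "z = 0" using w a.trunc_above a.G_above[OF pA[OF w(1)]] by simp
      then show ?thesis unfolding T_def by auto
    qed
  qed
  have "a.below n \<subseteq> a.span T"
  proof
    fix x assume x: "x \<in> a.below n"
    have "x = a.trunc n x" using a.trunc_id[OF x] by simp
    also have "\<dots> \<in> a.trunc n ` a.span W" using WU by auto
    also have "a.trunc n ` a.span W = a.span (a.trunc n ` W)" by (simp add: lt.span_image)
    also have "\<dots> \<subseteq> a.span T" by (rule a.span_mono[OF tW])
    finally show "x \<in> a.span T" .
  qed
  then show ?thesis using fT by blast
qed

end


locale twog3 = twog +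
  assumes K2B: "\<And>n y. \<exists>f g. f \<in> b.below n \<and> g \<in> a.above n \<and> y = f + g"
    and fin: "(\<forall>n. \<exists>T. finite T \<and> a.below n \<subseteq> a.span T) \<or>
              (\<forall>n. \<exists>T. finite T \<and> b.below n \<subseteq> a.span T)"
begin

lemma S1: "y \<in> b.below n \<Longrightarrow> \<exists>f \<in> a.below n. b.trunc n f = y"
proof -
  assume y: "y \<in> b.below n"
  obtain f g where fg: "f \<in> a.below n" "g \<in> b.above n" "y = f + g" using K2 by blast
  interpret lt: Vector_Spaces.linear smult smult "b.trunc n" by (rule b.trunc_linear)
  have "b.trunc n f = b.trunc n y - b.trunc n g" using fg(3) by (simp add: lt.add)
  also have "\<dots> = y" using b.trunc_id[OF y] b.trunc_above[OF fg(2)] by simp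
  finally show ?thesis using fg(1) by blast
qed

lemma S2: "x \<in> a.below n \<Longrightarrow> \<exists>g \<in> b.below n. a.trunc n g = x"
proof -
  assume x: "x \<in> a.below n"
  obtain f g where fg: "f \<in> b.below n" "g \<in> a.above n" "x = f + g" using K2B by blast
  interpret lt: Vector_Spaces.linear smult smult "a.trunc n" by (rule a.trunc_linear)
  have "a.trunc n f = a.trunc n x - a.trunc n g" using fg(3) by (simp add: lt.add)
  also have "\<dots> = x" using a.trunc_id[OF x] a.trunc_above[OF fg(2)] by simp
  finally show ?thesis using fg(1) by blast
qed

lemma K3: "x \<in> a.below n \<Longrightarrow> x \<in> b.above n \<Longrightarrow> x = 0"
proof -
  assume x: "x \<in> a.below n" and xb: "x \<in> b.above n"
  have lin: "Vector_Spaces.linear smult smult (a.trunc n \<circ> b.trunc n)"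
    "Vector_Spaces.linear smult smult (b.trunc n \<circ> a.trunc n)"
    using Vector_Spaces.linear_compose[OF a.trunc_linear b.trunc_linear]
      Vector_Spaces.linear_compose[OF b.trunc_linear a.trunc_linear] by auto
  interpret la: Vector_Spaces.linear smult smult "a.trunc n" by (rule a.trunc_linear)
  have Phx: "b.trunc n x = 0" by (rule b.trunc_above[OF xb])
  from fin show ?thesis
  proof
    assume "\<forall>n. \<exists>T. finite T \<and> a.below n \<subseteq> a.span T"
    then obtain T where T: "finite T" "a.below n \<subseteq> a.span T" by blast
    have sur: "a.below n \<subseteq> (a.trunc n \<circ> b.trunc n) ` a.below n"
    proof
      fix z assume "z \<in> a.below n"
      then obtain g where g: "g \<in> b.below n" "a.trunc n g = z" using S2 by blast
      then obtain f where f: "f \<in> a.below n" "b.trunc n f = g" using S1 by blast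
      show "z \<in> (a.trunc n \<circ> b.trunc n) ` a.below n" using f g by force
    qed
    show "x = 0" by (rule a.kernel_fin[OF lin(1) T sur x]) (simp add: Phx la.zero)
  next
    assume "\<forall>n. \<exists>T. finite T \<and> b.below n \<subseteq> a.span T"
    then obtain T where T: "finite T" "b.below n \<subseteq> a.span T" by blast
    have sur: "b.below n \<subseteq> (b.trunc n \<circ> a.trunc n) ` b.below n"
    proof
      fix z assume "z \<in> b.below n"
      then obtain f where f: "f \<in> a.below n" "b.trunc n f = z" using S1 by blast
      then obtain g where g: "g \<in> b.below n" "a.trunc n g = f" using S2 by blast
      show "z \<in> (b.trunc n \<circ> a.trunc n) ` b.below n" using f g by force
    qed
    obtain g where g: "g \<in> b.below n" "a.trunc n g = x" using S2 x by blast
    have "g = 0" by (rule a.kernel_fin[OF lin(2) T sur g(1)]) (simp add: g(2) Phx)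
    then show "x = 0" using g(2) la.zero by simp
  qed
qed

definition tau where
  "tau e y = (THE g. g \<in> b.above e \<and> y - g \<in> a.below e)"

lemma tau_ex1: "\<exists>!g. g \<in> b.above e \<and> y - g \<in> a.below e"
proof -
  obtain f g where fg: "f \<in> a.below e" "g \<in> b.above e" "y = f + g" using K2 by blast
  show ?thesis
  proof (rule ex1I[of _ g])
    show "g \<in> b.above e \<and> y - g \<in> a.below e" using fg by simp
    fix g' assume g': "g' \<in> b.above e \<and> y - g' \<in> a.below e"
    have "g' - g \<in> b.above e" using g' fg a.subspace_diff[OF b.above_sub] by blast
    moreover have "(y - g) - (y - g') \<in> a.below e"
      by (rule a.subspace_diff[OF a.below_sub]) (use fg g' in auto)
    then have "g' - g \<in> a.below e" by simp
    ultimately show "g' = g" using K3 by fastforce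
  qed
qed

lemma tau_prop: "tau e y \<in> b.above e" "y - tau e y \<in> a.below e"
  using theI'[OF tau_ex1[of e y]] unfolding tau_def by auto

lemma tau_unique: "g \<in> b.above e \<Longrightarrow> y - g \<in> a.below e \<Longrightarrow> tau e y = g"
  unfolding tau_def by (rule the1_equality[OF tau_ex1]) simp

lemma tau_add: "tau e (x + y) = tau e x + tau e y"
proof (rule tau_unique)
  show "tau e x + tau e y \<in> b.above e" using tau_prop a.subspace_add[OF b.above_sub] by blast
  have eq: "x + y - (tau e x + tau e y) = (x - tau e x) + (y - tau e y)" by simp
  show "x + y - (tau e x + tau e y) \<in> a.below e"
    unfolding eq by (rule a.subspace_add[OF a.below_sub tau_prop(2) tau_prop(2)])
qed

lemma tau_scale: "tau e (smult c x) = smult c (tau e x)"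
proof (rule tau_unique)
  show "smult c (tau e x) \<in> b.above e" using tau_prop a.subspace_scale[OF b.above_sub] by blast
  have eq: "smult c x - smult c (tau e x) = smult c (x - tau e x)" by (simp add: a.scale_right_diff_distrib)
  show "smult c x - smult c (tau e x) \<in> a.below e"
    unfolding eq by (rule a.subspace_scale[OF a.below_sub tau_prop(2)])
qed

lemma tau_below: "y \<in> A e \<Longrightarrow> tau e y \<in> a.below (Suc e)"
proof -
  assume y: "y \<in> A e"
  have 1: "y \<in> a.below (Suc e)" using a.G_below[OF y] by simp
  have 2: "y - tau e y \<in> a.below (Suc e)" using a.below_mono[OF tau_prop(2)] by simp
  have "y - (y - tau e y) \<in> a.below (Suc e)" by (rule a.subspace_diff[OF a.below_sub 1 2])
  then show ?thesis by simp
qed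

lemma tau_mult:
  assumes x: "x \<in> A i" and y: "y \<in> A j"
  shows "tau (i + j) (x * y) = tau i x * tau j y"
proof (rule tau_unique)
  show "tau i x * tau j y \<in> b.above (i + j)" using b.above_mult tau_prop by blast
  have e: "x * y - tau i x * tau j y = (x - tau i x) * tau j y + x * (y - tau j y)"
    by (simp add: algebra_simps)
  have 1: "(x - tau i x) * tau j y \<in> a.below (i + j)"
    using a.below_mult[OF tau_prop(2) tau_below[OF y]] by simp
  have 2: "x * (y - tau j y) \<in> a.below (i + j)"
    using a.below_mult[OF a.G_below[OF x, of "Suc i"] tau_prop(2)] by simp
  show "x * y - tau i x * tau j y \<in> a.below (i + j)"
    unfolding e using 1 2 a.subspace_add[OF a.below_sub] by blast
qed

lemma tau_one: "tau 0 1 = 1"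
  by (rule tau_unique) (auto simp: a.below_def)

definition rhoe where "rhoe e y = b.cp e (tau e y)"

lemma rhoe_add: "rhoe e (x + y) = rhoe e x + rhoe e y"
  unfolding rhoe_def by (simp add: tau_add b.cp_add)
lemma rhoe_scale: "rhoe e (smult c x) = smult c (rhoe e x)"
  unfolding rhoe_def by (simp add: tau_scale b.cp_scale)
lemma rhoe_zero[simp]: "rhoe e 0 = 0"
  using rhoe_add[of e 0 0] by simp
lemma rhoe_mem: "rhoe e y \<in> B e" unfolding rhoe_def by (rule b.cp_mem)
lemma rhoe_mult: "x \<in> A i \<Longrightarrow> y \<in> A j \<Longrightarrow> rhoe (i + j) (x * y) = rhoe i x * rhoe j y"
  unfolding rhoe_def by (simp add: tau_mult b.cp_mult_above tau_prop)

lemma rhoe_inj: "y \<in> A e \<Longrightarrow> rhoe e y = 0 \<Longrightarrow> y = 0"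
proof -
  assume y: "y \<in> A e" and r: "rhoe e y = 0"
  have "tau e y \<in> b.above (Suc e)"
    using tau_prop(1)[where e=e and y=y] r unfolding rhoe_def b.above_def by (auto simp: less_Suc_eq)
  then have t0: "tau e y = 0" using K3 tau_below[OF y] by blast
  then have "y \<in> a.below e" using tau_prop(2)[where e=e and y=y] by simp
  then show "y = 0" using a.below_G y by blast
qed

definition rho where
  "rho y = (\<Sum>e\<in>{e. a.cp e y \<noteq> 0}. rhoe e (a.cp e y))"

lemma rho_sum: "finite S \<Longrightarrow> {e. a.cp e y \<noteq> 0} \<subseteq> S \<Longrightarrow> rho y = (\<Sum>e\<in>S. rhoe e (a.cp e y))"
  unfolding rho_def by (rule sum.mono_neutral_left) auto

lemma rho_hom: "y \<in> A e \<Longrightarrow> rho y = rhoe e y"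
proof -
  assume y: "y \<in> A e"
  have "rho y = (\<Sum>i\<in>{e}. rhoe i (a.cp i y))"
    by (rule rho_sum) (auto simp: a.cp_hom[OF y] split: if_splits)
  then show ?thesis by (simp add: a.cp_hom[OF y])
qed

lemma rho_zero: "rho 0 = 0" unfolding rho_def by simp

lemma rho_add: "rho (x + y) = rho x + rho y"
proof -
  define S where "S = {e. a.cp e x \<noteq> 0} \<union> {e. a.cp e y \<noteq> 0}"
  have fS: "finite S" using a.cp_fin S_def by auto
  have "rho (x + y) = (\<Sum>e\<in>S. rhoe e (a.cp e (x + y)))"
    by (rule rho_sum[OF fS]) (auto simp: S_def a.cp_add)
  also have "\<dots> = (\<Sum>e\<in>S. rhoe e (a.cp e x)) + (\<Sum>e\<in>S. rhoe e (a.cp e y))"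
    by (simp add: a.cp_add rhoe_add sum.distrib)
  also have "\<dots> = rho x + rho y"
    using rho_sum[OF fS, of x] rho_sum[OF fS, of y] S_def by auto
  finally show ?thesis .
qed

lemma rho_scale: "rho (smult c x) = smult c (rho x)"
proof -
  define S where "S = {e. a.cp e x \<noteq> 0}"
  have fS: "finite S" using a.cp_fin S_def by auto
  have "rho (smult c x) = (\<Sum>e\<in>S. rhoe e (a.cp e (smult c x)))"
    by (rule rho_sum[OF fS]) (auto simp: S_def a.cp_scale)
  also have "\<dots> = smult c (\<Sum>e\<in>S. rhoe e (a.cp e x))"
    by (simp add: a.cp_scale rhoe_scale a.scale_sum_right)
  also have "\<dots> = smult c (rho x)"
    using rho_sum[OF fS, of x] S_def by auto
  finally show ?thesis .
qed

lemma rho_linear: "Vector_Spaces.linear smult smult rho"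
  by (simp add: Vector_Spaces.linear_iff a.vector_space_axioms rho_add rho_scale)

lemma rho_sumf: "rho (sum f S) = (\<Sum>i\<in>S. rho (f i))"
  by (induct S rule: infinite_finite_induct) (auto simp: rho_add rho_zero)

lemma rho_mult: "rho (x * y) = rho x * rho y"
proof -
  interpret lr: Vector_Spaces.linear smult smult rho by (rule rho_linear)
  define S where "S = {i. a.cp i x \<noteq> 0} \<union> {i. a.cp i y \<noteq> 0}"
  have fS: "finite S" using a.cp_fin S_def by auto
  have "x * y = (\<Sum>i\<in>S. a.cp i x) * (\<Sum>j\<in>S. a.cp j y)"
    using a.cp_sum[OF fS, of x] a.cp_sum[OF fS, of y] S_def by auto
  also have "\<dots> = (\<Sum>i\<in>S. \<Sum>j\<in>S. a.cp i x * a.cp j y)"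
    by (simp add: sum_product)
  finally have "rho (x * y) = (\<Sum>i\<in>S. \<Sum>j\<in>S. rho (a.cp i x * a.cp j y))"
    by (simp add: rho_sumf)
  also have "\<dots> = (\<Sum>i\<in>S. \<Sum>j\<in>S. rhoe i (a.cp i x) * rhoe j (a.cp j y))"
    by (simp add: rho_hom[OF a.G_mult[OF a.cp_mem a.cp_mem]] rhoe_mult[OF a.cp_mem a.cp_mem])
  also have "\<dots> = (\<Sum>i\<in>S. rhoe i (a.cp i x)) * (\<Sum>j\<in>S. rhoe j (a.cp j y))"
    by (simp add: sum_product)
  also have "\<dots> = rho x * rho y"
    using rho_sum[OF fS, of x] rho_sum[OF fS, of y] S_def by auto
  finally show ?thesis .
qed

lemma rho_one: "rho 1 = 1"
  using rho_hom[OF a.one_G0] b.cp_hom[OF b.one_G0] unfolding rhoe_def by (simp add: tau_one)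

lemma b_cp_rho: "b.cp j (rho y) = rhoe j (a.cp j y)"
proof -
  define S where "S = insert j {e. a.cp e y \<noteq> 0}"
  have fS: "finite S" using a.cp_fin S_def by auto
  have "rho y = (\<Sum>e\<in>S. rhoe e (a.cp e y))"
    by (rule rho_sum[OF fS]) (auto simp: S_def)
  then have "b.cp j (rho y) = (\<Sum>e\<in>S. b.cp j (rhoe e (a.cp e y)))"
    by (simp add: b.cp_sumf)
  also have "\<dots> = (\<Sum>e\<in>S. if e = j then rhoe j (a.cp j y) else 0)"
    by (rule sum.cong) (auto simp: b.cp_hom[OF rhoe_mem])
  also have "\<dots> = rhoe j (a.cp j y)" using fS S_def by simp
  finally show ?thesis .
qed

lemma rho_inj: "inj rho"
proof -
  interpret lr: Vector_Spaces.linear smult smult rho by (rule rho_linear)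
  have "y = 0" if "rho y = 0" for y
  proof (rule a.cp_eqI)
    fix j
    have "rhoe j (a.cp j y) = 0" using b_cp_rho[of j y] that by simp
    then show "a.cp j y = a.cp j 0" using rhoe_inj[OF a.cp_mem] by simp
  qed
  then show ?thesis using lr.inj_iff_eq_0 by blast
qed

lemma rho_A1: "x \<in> A 1 \<Longrightarrow> rho x = b.cp 1 x"
proof -
  assume x: "x \<in> A 1"
  have "tau 1 x = x - b.cp 0 x"
  proof (rule tau_unique)
    show "x - b.cp 0 x \<in> b.above 1" using b.cp_above[of x 0] by simp
    have "b.cp 0 x \<in> A 0" using b.cp_mem AB0 by auto
    then show "x - (x - b.cp 0 x) \<in> a.below 1" using a.G_below by simp
  qed
  then show ?thesis using rho_hom[OF x] unfolding rhoe_def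
    by (simp add: b.cp_diff b.cp_cp)
qed

lemma rho_surj: "surj rho"
proof -
  interpret lr: Vector_Spaces.linear smult smult rho by (rule rho_linear)
  have "y \<in> range rho" for y
  proof (rule gen_univ[OF genB])
    show "a.subspace (range rho)" using lr.subspace_image[OF a.subspace_UNIV] by simp
    show "1 \<in> range rho" using rho_one by (metis rangeI)
    show "x * y \<in> range rho" if xr: "x \<in> range rho" and yr: "y \<in> range rho" for x y
    proof -
      obtain u v where "x = rho u" "y = rho v" using xr yr by blast
      then have "x * y = rho (u * v)" by (simp add: rho_mult)
      then show ?thesis by blast
    qed
    show "B 1 \<subseteq> range rho"
    proof
      fix b assume b: "b \<in> B 1"
      obtain f g where fg: "f \<in> a.below 2" "g \<in> b.above 2" "b = f + g" using K2 by blast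
      have "f = a.trunc 2 f" using a.trunc_id[OF fg(1)] by simp
      also have "\<dots> = a.cp 0 f + a.cp 1 f" by (simp add: a.trunc_def numeral_2_eq_2)
      finally have fe: "f = a.cp 0 f + a.cp 1 f" .
      have "b.cp 1 g = 0" using fg(2) unfolding b.above_def by simp
      moreover have "b.cp 1 b = b.cp 1 f + b.cp 1 g" using fg(3) b.cp_add by simp
      moreover have "b.cp 1 b = b" using b.cp_hom[OF b] by simp
      ultimately have "b.cp 1 f = b" by simp
      moreover have "b.cp 1 (a.cp 0 f) = 0"
        using b.cp_hom[of "a.cp 0 f" 0 1] a.cp_mem[of 0 f] AB0 by simp
      ultimately have "b.cp 1 (a.cp 1 f) = b" using fe by (metis add_0 b.cp_add)
      then have "rho (a.cp 1 f) = b" using rho_A1[OF a.cp_mem] by simp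
      then show "b \<in> range rho" by (metis rangeI)
    qed
  qed
  then show ?thesis by blast
qed

lemma rho_aut: "alg_aut smult rho"
  unfolding alg_aut_def using rho_inj rho_surj rho_linear rho_mult rho_one
  by (simp add: bij_def)

lemma final: "(\<forall>i. rho ` A i = A i) \<Longrightarrow> A e = B e"
proof -
  assume h: "\<forall>i. rho ` A i = A i"
  have AB: "A i \<subseteq> B i" for i
  proof
    fix x assume "x \<in> A i"
    then have "x \<in> rho ` A i" using h by simp
    then obtain x' where "x' \<in> A i" "x = rho x'" by blast
    then show "x \<in> B i" using rho_hom rhoe_mem by simp
  qed
  have "B e \<subseteq> A e"
  proof
    fix y assume y: "y \<in> B e"
    define S where "S = insert e {i. a.cp i y \<noteq> 0}"
    have fS: "finite S" using a.cp_fin S_def by auto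
    have ysum: "y = (\<Sum>i\<in>S. a.cp i y)" by (rule a.cp_sum[OF fS]) (auto simp: S_def)
    have "y = b.cp e y" using b.cp_hom[OF y] by simp
    also have "\<dots> = b.cp e (\<Sum>i\<in>S. a.cp i y)" by (rule arg_cong[OF ysum])
    also have "\<dots> = (\<Sum>i\<in>S. if i = e then a.cp i y else 0)"
      unfolding b.cp_sumf
      by (rule sum.cong) (auto simp: b.cp_hom[OF AB[THEN subsetD, OF a.cp_mem]])
    also have "\<dots> = a.cp e y" using fS S_def by simp
    finally show "y \<in> A e" using a.cp_mem by metis
  qed
  then show ?thesis using AB by blast
qed

end

theorem corollary3:
  fixes smult :: "'k::field \<Rightarrow> 'a::ring_1 \<Rightarrow> 'a"
    and A B :: "nat \<Rightarrow> 'a set"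
  assumes "k_algebra smult"
    and "graded_decomp smult A"
    and "graded_decomp smult B"
    and "A 0 = range (\<lambda>c. smult c 1)"
    and "B 0 = range (\<lambda>c. smult c 1)"
    and "alg_gen smult (A 1) = UNIV"
    and "alg_gen smult (B 1) = UNIV"
    and "fin_dim smult (A 1) \<or> fin_dim smult (B 1)"
    and "\<forall>\<phi>. alg_aut smult \<phi> \<longrightarrow> (\<forall>i. \<phi> ` A i = A i)"
  shows "\<forall>i. A i = B i"
proof -
  interpret t: twog smult A B
    by (unfold_locales) (use assms in auto)
  interpret s: twog smult B A
    by (unfold_locales) (use assms in auto)
  have K2B: "\<exists>f g. f \<in> t.b.below n \<and> g \<in> t.a.above n \<and> y = f + g" for n y
    using s.K2 by blast
  have fin: "(\<forall>n. \<exists>T. finite T \<and> t.a.below n \<subseteq> t.a.span T) \<or>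
              (\<forall>n. \<exists>T. finite T \<and> t.b.below n \<subseteq> t.a.span T)"
    using assms(8) t.fin_below s.fin_below by blast
  interpret u: twog3 smult A B
    by (unfold_locales) (use K2B fin in auto)
  have "\<forall>i. u.rho ` A i = A i" using assms(9) u.rho_aut by blast
  then show ?thesis using u.final by blast
qed

end
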